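(* Let $l\ge3$ be odd and consider the edge reinforced random walk on $\mathcal G_l$ with weight function $W:\mathbb N\to(0,\infty)$, arbitrary initial edge weights $X_0^e\in\mathbb N$ and arbitrary starting vertex. If $\beta=(\beta_0,\ldots,\beta_{l-1})\in\mathbb R^l$ is a deterministic vector such that $\big(\sum_{i=0}^{l-1}\beta_iW^*(X_n^{e_i})\big)_{n\ge0}$ is an $(\mathcal F_n)$-martingale, then $\beta=0$.
   Context: $\mathbb N=\{0,1,2,\ldots\}$. For $l\ge 3$, the cycle $\mathcal G_l$ has vertices $\{0,\ldots,l-1\}$ and edges $e_i=\{i,i+1\}$, addition modulo $l$. ERRW on $\mathcal G_l$: given $W:\mathbb N\to(0,\infty)$, initial edge weights $X_0^e\in\mathbb N$ and $I_0=v_0$, with natural filtration $(\mathcal F_n)$, $\mathbb P(I_{n+1}=v'\mid\mathcal F_n)1_{\{I_n=v\}}=\frac{W(X_n^{\{v,v'\}})}{\sum_{w\sim v}W(X_n^{\{v,w\}})}1_{\{I_n=v\sim v'\}}$, where $X_n^e=X_0^e+\sum_{k=0}^{n-1}1_{\{\{I_k,I_{k+1}\}=e\}}$. Define $W^*(n):=\sum_{k=0}^{n-1}\frac1{W(k)}$ for $n\in\mathbb N$, with $W^*(0)=0$. *)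

theory Defs
  imports "HOL-Probability.Probability"
begin

definition cyc_adj :: "nat \<Rightarrow> nat \<Rightarrow> nat \<Rightarrow> bool" where
  "cyc_adj l v w \<longleftrightarrow> v < l \<and> w < l \<and> (w = Suc v mod l \<or> v = Suc w mod l)"

definition cyc_edge :: "nat \<Rightarrow> nat \<Rightarrow> nat set" where
  "cyc_edge l i = {i, Suc i mod l}"

definition errw_X :: "nat \<Rightarrow> (nat \<Rightarrow> nat) \<Rightarrow> (nat \<Rightarrow> nat) \<Rightarrow> nat \<Rightarrow> nat \<Rightarrow> nat" where
  "errw_X l X0 p n i = X0 i + card {k. k < n \<and> {p k, p (Suc k)} = cyc_edge l i}"

definition edge_index :: "nat \<Rightarrow> nat \<Rightarrow> nat \<Rightarrow> nat" where
  "edge_index l v w = (if w = Suc v mod l then v else w)"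

definition errw_trans ::
  "nat \<Rightarrow> (nat \<Rightarrow> real) \<Rightarrow> (nat \<Rightarrow> nat) \<Rightarrow> (nat \<Rightarrow> nat) \<Rightarrow> nat \<Rightarrow> nat \<Rightarrow> real" where
  "errw_trans l W X0 p n w =
     (if cyc_adj l (p n) w then
        W (errw_X l X0 p n (edge_index l (p n) w)) /
        (\<Sum>u\<in>{u. u < l \<and> cyc_adj l (p n) u}. W (errw_X l X0 p n (edge_index l (p n) u)))
      else 0)"

text \<open>ERRW on G_l realized on a probability space M by the process I with I_0 = v0:
  the law of (I_0,...,I_{n+1}) is given by the conditional transition probabilities.\<close>
definition is_errw ::
  "'a measure \<Rightarrow> nat \<Rightarrow> (nat \<Rightarrow> real) \<Rightarrow> (nat \<Rightarrow> nat) \<Rightarrow> nat \<Rightarrow> (nat \<Rightarrow> 'a \<Rightarrow> nat) \<Rightarrow> bool" where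
  "is_errw M l W X0 v0 I \<longleftrightarrow>
     prob_space M \<and>
     (\<forall>n. I n \<in> measurable M (count_space UNIV)) \<and>
     (\<forall>\<omega>\<in>space M. I 0 \<omega> = v0) \<and>
     (\<forall>n h w. measure M {\<omega>\<in>space M. (\<forall>k\<le>n. I k \<omega> = h k) \<and> I (Suc n) \<omega> = w}
              = measure M {\<omega>\<in>space M. \<forall>k\<le>n. I k \<omega> = h k} * errw_trans l W X0 h n w)"

definition nat_filtration :: "'a measure \<Rightarrow> (nat \<Rightarrow> 'a \<Rightarrow> nat) \<Rightarrow> nat \<Rightarrow> 'a measure" where
  "nat_filtration M I n = sigma (space M) {I k -` A \<inter> space M | k A. k \<le> n}"

text \<open>Real-valued martingale with respect to a filtration F (standard definition:
  adapted, integrable, and E[Y_{n+1} | F_n] = Y_n, i.e. equal integrals over F_n-sets).\<close>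
definition is_martingale :: "'a measure \<Rightarrow> (nat \<Rightarrow> 'a measure) \<Rightarrow> (nat \<Rightarrow> 'a \<Rightarrow> real) \<Rightarrow> bool" where
  "is_martingale M F Y \<longleftrightarrow>
     (\<forall>n. Y n \<in> borel_measurable (F n)) \<and>
     (\<forall>n. integrable M (Y n)) \<and>
     (\<forall>n. \<forall>A\<in>sets (F n). (\<integral>\<omega>. indicator A \<omega> * Y (Suc n) \<omega> \<partial>M) = (\<integral>\<omega>. indicator A \<omega> * Y n \<omega> \<partial>M))"

definition Wstar :: "(nat \<Rightarrow> real) \<Rightarrow> nat \<Rightarrow> real" where
  "Wstar W n = (\<Sum>k<n. 1 / W k)"

end

theory Submission imports Defs begin

definition ysum :: "nat \<Rightarrow> (nat \<Rightarrow> real) \<Rightarrow> (nat \<Rightarrow> nat) \<Rightarrow> (nat \<Rightarrow> real) \<Rightarrow> (nat \<Rightarrow> nat) \<Rightarrow> nat \<Rightarrow> real" where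
  "ysum l W X0 \<beta> p n = (\<Sum>i<l. \<beta> i * Wstar W (errw_X l X0 p n i))"

definition cpred :: "nat \<Rightarrow> nat \<Rightarrow> nat" where
  "cpred l v = (if v = 0 then l - 1 else v - 1)"

lemma errw_X_cong:
  assumes "\<forall>k\<le>n. p k = q k"
  shows "errw_X l X0 p n i = errw_X l X0 q n i"
proof -
  have "{k. k < n \<and> {p k, p (Suc k)} = cyc_edge l i} = {k. k < n \<and> {q k, q (Suc k)} = cyc_edge l i}"
    using assms by auto
  thus ?thesis unfolding errw_X_def by simp
qed

lemma errw_X_Suc:
  "errw_X l X0 p (Suc n) i = errw_X l X0 p n i + (if {p n, p (Suc n)} = cyc_edge l i then 1 else 0)"
proof (cases "{p n, p (Suc n)} = cyc_edge l i")
  case True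
  have "{k. k < Suc n \<and> {p k, p (Suc k)} = cyc_edge l i} =
        insert n {k. k < n \<and> {p k, p (Suc k)} = cyc_edge l i}"
    using True by (auto simp: less_Suc_eq)
  moreover have "n \<notin> {k. k < n \<and> {p k, p (Suc k)} = cyc_edge l i}" by simp
  moreover have "finite {k. k < n \<and> {p k, p (Suc k)} = cyc_edge l i}" by simp
  ultimately show ?thesis unfolding errw_X_def using True by simp
next
  case False
  have "{k. k < Suc n \<and> {p k, p (Suc k)} = cyc_edge l i} =
        {k. k < n \<and> {p k, p (Suc k)} = cyc_edge l i}"
    using False by (auto simp: less_Suc_eq)
  then show ?thesis unfolding errw_X_def using False by simp
qed

lemma Wstar_Suc: "Wstar W (Suc m) = Wstar W m + 1 / W m"
  unfolding Wstar_def by simp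

lemma Suc_mod_cases: "v < l \<Longrightarrow> Suc v mod l = (if Suc v = l then 0 else Suc v)"
  by (cases "Suc v = l") simp_all

lemma cyc_aux:
  assumes "(l::nat) \<ge> 3" "i < l" "j < l" "i \<noteq> j" and ij: "i = Suc j mod l" "j = Suc i mod l"
  shows False
proof -
  have a: "i = (if Suc j = l then 0 else Suc j)" using ij(1) Suc_mod_cases[OF assms(3)] by (rule trans)
  have b: "j = (if Suc i = l then 0 else Suc i)" using ij(2) Suc_mod_cases[OF assms(2)] by (rule trans)
  show False
  proof (cases "Suc j = l")
    case True
    then have "i = 0" using a by simp
    then show False using b True assms(1) by (simp split: if_splits)
  next
    case False
    then have "i = Suc j" using a by simp
    then show False using b assms(1) by (simp split: if_splits)
  qed
qed

lemma cyc_edge_inj: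
  assumes "l \<ge> 3" "i < l" "j < l" "cyc_edge l i = cyc_edge l j"
  shows "i = j"
proof (rule ccontr)
  assume ne: "i \<noteq> j"
  have m1: "i \<in> {j, Suc j mod l}" using assms(4) unfolding cyc_edge_def by blast
  have m2: "j \<in> {i, Suc i mod l}" using assms(4) unfolding cyc_edge_def by blast
  have ij1: "i = Suc j mod l" using m1 ne by blast
  have ij2: "j = Suc i mod l" using m2 ne by blast
  show False by (rule cyc_aux[OF assms(1-3) ne ij1 ij2])
qed

lemma ysum_step:
  assumes "l \<ge> 3" "j < l" "{p n, p (Suc n)} = cyc_edge l j"
  shows "ysum l W X0 \<beta> p (Suc n) = ysum l W X0 \<beta> p n + \<beta> j / W (errw_X l X0 p n j)"
proof -
  have e: "({p n, p (Suc n)} = cyc_edge l i) = (i = j)" if il: "i < l" for i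
  proof
    assume "{p n, p (Suc n)} = cyc_edge l i"
    then have "cyc_edge l i = cyc_edge l j" by (rule trans[OF sym assms(3)])
    then show "i = j" by (rule cyc_edge_inj[OF assms(1) il assms(2)])
  next
    assume "i = j" then show "{p n, p (Suc n)} = cyc_edge l i" using assms(3) by (simp only:)
  qed
  have "ysum l W X0 \<beta> p (Suc n) = (\<Sum>i<l. \<beta> i * Wstar W (errw_X l X0 p n i) +
         (if i = j then \<beta> i / W (errw_X l X0 p n i) else 0))"
    unfolding ysum_def
  proof (rule sum.cong[OF refl])
    fix i assume "i \<in> {..<l}"
    then have il: "i < l" by simp
    have x: "errw_X l X0 p (Suc n) i = errw_X l X0 p n i + (if i = j then 1 else 0)"
      by (simp only: errw_X_Suc e[OF il])
    show "\<beta> i * Wstar W (errw_X l X0 p (Suc n) i) = \<beta> i * Wstar W (errw_X l X0 p n i) +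
         (if i = j then \<beta> i / W (errw_X l X0 p n i) else 0)"
    proof (cases "i = j")
      case True
      then show ?thesis unfolding x by (simp add: Wstar_Suc algebra_simps)
    next
      case False
      then show ?thesis unfolding x by simp
    qed
  qed
  also have "\<dots> = ysum l W X0 \<beta> p n + \<beta> j / W (errw_X l X0 p n j)"
    unfolding ysum_def sum.distrib using assms(2) by simp
  finally show ?thesis .
qed

lemma pred_iff:
  assumes "v < (l::nat)" "x < l"
  shows "(v = Suc x mod l) = (x = cpred l v)"
proof -
  have s: "Suc x mod l = (if Suc x = l then 0 else Suc x)" using Suc_mod_cases[OF assms(2)] .
  show ?thesis
  proof (cases "Suc x = l")
    case True
    then show ?thesis using assms unfolding s cpred_def by auto
  next
    case False
    then show ?thesis using assms unfolding s cpred_def by auto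
  qed
qed
lemma adj_set:
  assumes "l \<ge> 3" "v < l"
  shows "{u. u < l \<and> cyc_adj l v u} = {Suc v mod l, cpred l v}"
    and "Suc v mod l \<noteq> cpred l v"
    and "cpred l v < l" "Suc v mod l < l"
    and "Suc (cpred l v) mod l = v"
proof -
  have s: "Suc v mod l = (if Suc v = l then 0 else Suc v)" using Suc_mod_cases[OF assms(2)] .
  show "Suc v mod l \<noteq> cpred l v"
  proof (cases "Suc v = l")
    case True
    then show ?thesis using assms unfolding s cpred_def by auto
  next
    case False
    then show ?thesis using assms unfolding s cpred_def by auto
  qed
  show "cpred l v < l" using assms unfolding cpred_def by auto
  show "Suc v mod l < l" using assms by simp
  show "Suc (cpred l v) mod l = v"
    using pred_iff[OF assms(2), of "cpred l v"] \<open>cpred l v < l\<close> by simp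
  show "{u. u < l \<and> cyc_adj l v u} = {Suc v mod l, cpred l v}"
  proof (rule set_eqI)
    fix u
    show "(u \<in> {u. u < l \<and> cyc_adj l v u}) = (u \<in> {Suc v mod l, cpred l v})"
    proof
      assume "u \<in> {u. u < l \<and> cyc_adj l v u}"
      then have "u < l" "u = Suc v mod l \<or> v = Suc u mod l" unfolding cyc_adj_def by blast+
      then show "u \<in> {Suc v mod l, cpred l v}" using pred_iff[OF assms(2) \<open>u < l\<close>] by blast
    next
      assume "u \<in> {Suc v mod l, cpred l v}"
      then have "u = Suc v mod l \<or> u = cpred l v" by blast
      then show "u \<in> {u. u < l \<and> cyc_adj l v u}"
      proof
        assume "u = Suc v mod l"
        then show ?thesis using \<open>Suc v mod l < l\<close> assms(2) unfolding cyc_adj_def by blast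
      next
        assume u: "u = cpred l v"
        have "v = Suc u mod l" using pred_iff[OF assms(2) \<open>cpred l v < l\<close>] u by blast
        moreover have "u < l" using \<open>cpred l v < l\<close> u by simp
        ultimately show ?thesis using assms(2) unfolding cyc_adj_def by blast
      qed
    qed
  qed
qed

lemma ysum_cong:
  assumes "\<forall>k\<le>n. p k = q k"
  shows "ysum l W X0 \<beta> p n = ysum l W X0 \<beta> q n"
  unfolding ysum_def using errw_X_cong[OF assms] by simp

lemma trans_vals:
  fixes W :: "nat \<Rightarrow> real" and X0 :: "nat \<Rightarrow> nat"
  assumes l3: "l \<ge> 3" and v: "g n = v" "v < l"
  defines "S \<equiv> W (errw_X l X0 g n v) + W (errw_X l X0 g n (cpred l v))"
  shows "errw_trans l W X0 g n (Suc v mod l) = W (errw_X l X0 g n v) / S"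
    and "errw_trans l W X0 g n (cpred l v) = W (errw_X l X0 g n (cpred l v)) / S"
    and "w \<noteq> Suc v mod l \<Longrightarrow> w \<noteq> cpred l v \<Longrightarrow> errw_trans l W X0 g n w = 0"
proof -
  note A = adj_set[OF l3 v(2)]
  have ea: "edge_index l v (Suc v mod l) = v" unfolding edge_index_def by simp
  have eb: "edge_index l v (cpred l v) = cpred l v" unfolding edge_index_def using A(2) by auto
  have den: "(\<Sum>u\<in>{u. u < l \<and> cyc_adj l (g n) u}. W (errw_X l X0 g n (edge_index l (g n) u))) = S"
    unfolding v(1) A(1) S_def using A(2) ea eb by simp
  have adja: "cyc_adj l v (Suc v mod l)" and adjb: "cyc_adj l v (cpred l v)"
    using A(1) by blast+
  show "errw_trans l W X0 g n (Suc v mod l) = W (errw_X l X0 g n v) / S"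
    unfolding errw_trans_def den using adja ea v(1) by simp
  show "errw_trans l W X0 g n (cpred l v) = W (errw_X l X0 g n (cpred l v)) / S"
    unfolding errw_trans_def den using adjb eb v(1) by simp
  assume "w \<noteq> Suc v mod l" "w \<noteq> cpred l v"
  then have "\<not> cyc_adj l v w" using A(1) cyc_adj_def by blast
  then show "errw_trans l W X0 g n w = 0" unfolding errw_trans_def using v(1) by simp
qed

lemma step:
  fixes M :: "'a measure" and I :: "nat \<Rightarrow> 'a \<Rightarrow> nat"
  assumes l3: "l \<ge> 3" and Wpos: "\<And>k. W k > 0" and v0l: "v0 < l"
    and E: "is_errw M l W X0 v0 I"
    and Mart: "is_martingale M (nat_filtration M I) (\<lambda>n \<omega>. ysum l W X0 \<beta> (\<lambda>k. I k \<omega>) n)"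
  shows "\<beta> ((v0 + n) mod l) + \<beta> (cpred l ((v0 + n) mod l)) = 0"
proof -
  define h where "h k = (v0 + k) mod l" for k
  define Cyl where "Cyl n = {\<omega>\<in>space M. \<forall>k\<le>n. I k \<omega> = h k}" for n
  define Cw where "Cw n w = {\<omega>\<in>space M. (\<forall>k\<le>n. I k \<omega> = h k) \<and> I (Suc n) \<omega> = w}" for n w
  have P: "prob_space M" using E unfolding is_errw_def by blast
  then interpret prob_space M .
  have meas[measurable]: "\<And>k. I k \<in> measurable M (count_space UNIV)" using E unfolding is_errw_def by blast
  have I0: "\<And>\<omega>. \<omega> \<in> space M \<Longrightarrow> I 0 \<omega> = v0" using E unfolding is_errw_def by blast
  have trall: "\<forall>n g w. measure M {\<omega>\<in>space M. (\<forall>k\<le>n. I k \<omega> = g k) \<and> I (Suc n) \<omega> = w}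
              = measure M {\<omega>\<in>space M. \<forall>k\<le>n. I k \<omega> = g k} * errw_trans l W X0 g n w"
    using E unfolding is_errw_def by (elim conjE) assumption
  have tr: "\<And>n w. measure M (Cw n w) = measure M (Cyl n) * errw_trans l W X0 h n w"
    unfolding Cw_def Cyl_def using trall by simp
  have hl: "\<And>k. h k < l" unfolding h_def using l3 by simp
  have hS: "\<And>k. h (Suc k) = Suc (h k) mod l" unfolding h_def by (simp add: mod_Suc_eq)
  have CylI: "\<And>n. Cyl n = (\<Inter>k\<in>{..n}. I k -` {h k} \<inter> space M)"
    unfolding Cyl_def by auto
  have Cyl_sets: "\<And>n. Cyl n \<in> sets M"
    unfolding CylI by (rule sets.finite_INT) auto
  have Cw_eq: "\<And>n w. Cw n w = Cyl n \<inter> (I (Suc n) -` {w} \<inter> space M)"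
    unfolding Cw_def Cyl_def by auto
  have Cw_sets: "\<And>n w. Cw n w \<in> sets M"
    unfolding Cw_eq using Cyl_sets by auto
  have Gsub: "\<And>n. {I k -` A \<inter> space M | k A. k \<le> n} \<subseteq> Pow (space M)" by auto
  have Cyl_F: "\<And>n. Cyl n \<in> sets (nat_filtration M I n)"
    unfolding CylI nat_filtration_def
    by (rule sets.finite_INT) (auto intro!: in_measure_of[OF Gsub])
  have pos0: "measure M (Cyl 0) > 0"
  proof -
    have "Cyl 0 = space M" unfolding Cyl_def h_def using I0 v0l by auto
    then show ?thesis using prob_space by simp
  qed
  have posS: "measure M (Cyl (Suc m)) > 0" if IH: "measure M (Cyl m) > 0" for m
  proof -
    have e1: "Cyl (Suc m) = Cw m (h (Suc m))" unfolding Cyl_def Cw_def using le_Suc_eq by auto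
    have e2: "measure M (Cyl (Suc m)) = measure M (Cyl m) * errw_trans l W X0 h m (Suc (h m) mod l)"
      unfolding e1 tr hS ..
    have hm: "h m = h m" ..
    have e3': "errw_trans l W X0 h m (Suc (h m) mod l) = W (errw_X l X0 h m (h m)) /
       (W (errw_X l X0 h m (h m)) + W (errw_X l X0 h m (cpred l (h m))))"
      by (rule trans_vals(1)) (simp_all add: l3 hl)
    have e3: "errw_trans l W X0 h m (Suc (h m) mod l) > 0"
      unfolding e3' using Wpos by (simp add: add_pos_pos)
    show ?thesis unfolding e2 using IH e3 by simp
  qed
  have pos: "measure M (Cyl m) > 0" for m
    by (induction m) (use pos0 posS in auto)
  have mart_int: "\<And>n. integrable M (\<lambda>\<omega>. ysum l W X0 \<beta> (\<lambda>k. I k \<omega>) n)"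
    and mart_eq: "\<And>n A. A \<in> sets (nat_filtration M I n) \<Longrightarrow>
      (\<integral>\<omega>. indicator A \<omega> * ysum l W X0 \<beta> (\<lambda>k. I k \<omega>) (Suc n) \<partial>M)
      = (\<integral>\<omega>. indicator A \<omega> * ysum l W X0 \<beta> (\<lambda>k. I k \<omega>) n \<partial>M)"
    using Mart unfolding is_martingale_def by blast+
  define v where "v = h n"
  define a where "a = Suc v mod l"
  define b where "b = cpred l v"
  define x where "x j = errw_X l X0 h n j" for j
  define S where "S = W (x v) + W (x b)"
  define d where "d = ysum l W X0 \<beta> h n"
  define c where "c w = ysum l W X0 \<beta> (h(Suc n := w)) (Suc n)" for w
  have vl: "v < l" unfolding v_def using hl by simp
  note A = adj_set[OF l3 vl]
  have ab: "a \<noteq> b" using A(2) unfolding a_def b_def .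
  have Spos: "S > 0" unfolding S_def using Wpos by (simp add: add_pos_pos)
  have ta: "errw_trans l W X0 h n a = W (x v) / S"
    unfolding a_def S_def x_def b_def by (rule trans_vals(1)[where g=h and n=n, OF l3 v_def[symmetric] vl])
  have tb: "errw_trans l W X0 h n b = W (x b) / S"
    unfolding a_def S_def x_def b_def by (rule trans_vals(2)[where g=h and n=n, OF l3 v_def[symmetric] vl])
  have t0: "\<And>w. w \<noteq> a \<Longrightarrow> w \<noteq> b \<Longrightarrow> errw_trans l W X0 h n w = 0"
    unfolding a_def b_def by (rule trans_vals(3)[where g=h and n=n, OF l3 v_def[symmetric] vl])
  have hagree: "\<forall>k\<le>n. (h(Suc n := w)) k = h k" for w by simp
  have ca: "c a = d + \<beta> v / W (x v)"
  proof -
    have "c a = ysum l W X0 \<beta> (h(Suc n := a)) n + \<beta> v / W (errw_X l X0 (h(Suc n := a)) n v)"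
      unfolding c_def by (rule ysum_step[OF l3 vl]) (simp add: cyc_edge_def a_def v_def)
    then show ?thesis
      unfolding d_def x_def using ysum_cong[OF hagree] errw_X_cong[OF hagree] by simp
  qed
  have cb: "c b = d + \<beta> b / W (x b)"
  proof -
    have "c b = ysum l W X0 \<beta> (h(Suc n := b)) n + \<beta> b / W (errw_X l X0 (h(Suc n := b)) n b)"
      unfolding c_def by (rule ysum_step[OF l3 A(3)[folded b_def]])
        (use A(5) in \<open>auto simp: cyc_edge_def b_def v_def\<close>)
    then show ?thesis
      unfolding d_def x_def using ysum_cong[OF hagree] errw_X_cong[OF hagree] by simp
  qed
  have rhs: "(\<integral>\<omega>. indicator (Cyl n) \<omega> * ysum l W X0 \<beta> (\<lambda>k. I k \<omega>) n \<partial>M) = measure M (Cyl n) * d"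
  proof -
    have "(\<integral>\<omega>. indicator (Cyl n) \<omega> * ysum l W X0 \<beta> (\<lambda>k. I k \<omega>) n \<partial>M)
        = (\<integral>\<omega>. indicator (Cyl n) \<omega> * d \<partial>M)"
    proof (rule Bochner_Integration.integral_cong[OF refl])
      fix \<omega> assume "\<omega> \<in> space M"
      show "indicator (Cyl n) \<omega> * ysum l W X0 \<beta> (\<lambda>k. I k \<omega>) n = indicator (Cyl n) \<omega> * d"
        unfolding d_def by (cases "\<omega> \<in> Cyl n") (auto simp: Cyl_def intro!: ysum_cong)
    qed
    also have "\<dots> = measure M (Cyl n) * d"
      using Cyl_sets sets.sets_into_space by (simp add: Int_absorb2)
    finally show ?thesis .
  qed
  define N where "N = (\<Union>w. if w = a \<or> w = b then {} else Cw n w)"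
  have N_null: "N \<in> null_sets M"
    unfolding N_def
  proof (rule null_sets_UN)
    fix w
    show "(if w = a \<or> w = b then {} else Cw n w) \<in> null_sets M"
    proof (cases "w = a \<or> w = b")
      case False
      then have "measure M (Cw n w) = 0" using tr t0 by simp
      then show ?thesis using False Cw_sets by (simp add: null_sets_def emeasure_eq_measure)
    qed simp
  qed
  have lhs_ae: "AE \<omega> in M. indicator (Cyl n) \<omega> * ysum l W X0 \<beta> (\<lambda>k. I k \<omega>) (Suc n)
       = c a * indicator (Cw n a) \<omega> + c b * indicator (Cw n b) \<omega>"
  proof (rule AE_I'[OF N_null], safe)
    fix \<omega> assume sp: "\<omega> \<in> space M" and
      ne: "indicator (Cyl n) \<omega> * ysum l W X0 \<beta> (\<lambda>k. I k \<omega>) (Suc n)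
       \<noteq> c a * indicator (Cw n a) \<omega> + c b * indicator (Cw n b) \<omega>"
    show "\<omega> \<in> N"
    proof (cases "\<omega> \<in> Cyl n")
      case False
      then have "\<omega> \<notin> Cw n a" "\<omega> \<notin> Cw n b" unfolding Cw_def Cyl_def by auto
      then show ?thesis using ne False by simp
    next
      case True
      define w where "w = I (Suc n) \<omega>"
      have agr: "\<forall>k\<le>Suc n. I k \<omega> = (h(Suc n := w)) k"
        using True unfolding Cyl_def w_def by (auto simp: le_Suc_eq)
      have inw: "\<omega> \<in> Cw n w" using True sp unfolding Cyl_def Cw_def w_def by auto
      have ys: "ysum l W X0 \<beta> (\<lambda>k. I k \<omega>) (Suc n) = c w"
        unfolding c_def by (rule ysum_cong[OF agr])
      have "\<not> (w = a \<or> w = b)"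
      proof
        assume "w = a \<or> w = b"
        then show False
        proof
          assume "w = a"
          then have "\<omega> \<notin> Cw n b" using ab unfolding Cw_def w_def by auto
          then show False using ne True ys inw \<open>w = a\<close> by simp
        next
          assume "w = b"
          then have "\<omega> \<notin> Cw n a" using ab unfolding Cw_def w_def by auto
          then show False using ne True ys inw \<open>w = b\<close> by simp
        qed
      qed
      then show ?thesis unfolding N_def using inw by auto
    qed
  qed
  have lhs: "(\<integral>\<omega>. indicator (Cyl n) \<omega> * ysum l W X0 \<beta> (\<lambda>k. I k \<omega>) (Suc n) \<partial>M)
      = c a * measure M (Cw n a) + c b * measure M (Cw n b)"
  proof -
    have m1: "(\<lambda>\<omega>. ysum l W X0 \<beta> (\<lambda>k. I k \<omega>) (Suc n)) \<in> borel_measurable M"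
      using mart_int[of "Suc n"] by (rule borel_measurable_integrable)
    have "(\<integral>\<omega>. indicator (Cyl n) \<omega> * ysum l W X0 \<beta> (\<lambda>k. I k \<omega>) (Suc n) \<partial>M)
       = (\<integral>\<omega>. c a * indicator (Cw n a) \<omega> + c b * indicator (Cw n b) \<omega> \<partial>M)"
      by (rule integral_cong_AE[OF _ _ lhs_ae]) (use m1 Cyl_sets Cw_sets in auto)
    also have "\<dots> = c a * measure M (Cw n a) + c b * measure M (Cw n b)"
      using Cw_sets sets.sets_into_space
      by (subst Bochner_Integration.integral_add) (auto simp: Int_absorb2 less_top[symmetric])
    finally show ?thesis .
  qed
  have key: "c a * measure M (Cw n a) + c b * measure M (Cw n b) = measure M (Cyl n) * d"
    using lhs rhs mart_eq[OF Cyl_F] by simp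
  have "measure M (Cyl n) * (d + (\<beta> v + \<beta> b) / S) = measure M (Cyl n) * d"
  proof -
    have "c a * measure M (Cw n a) + c b * measure M (Cw n b)
        = measure M (Cyl n) * (c a * (W (x v) / S) + c b * (W (x b) / S))"
      using tr ta tb by (simp add: algebra_simps)
    also have "c a * (W (x v) / S) + c b * (W (x b) / S) = d + (\<beta> v + \<beta> b) / S"
    proof -
      have 1: "c a * (W (x v) / S) = (d * W (x v) + \<beta> v) / S"
        unfolding ca using Wpos[of "x v"] Spos by (simp add: field_simps)
      have 2: "c b * (W (x b) / S) = (d * W (x b) + \<beta> b) / S"
        unfolding cb using Wpos[of "x b"] Spos by (simp add: field_simps)
      have 3: "(d * W (x v) + \<beta> v) / S + (d * W (x b) + \<beta> b) / S = (d * S + (\<beta> v + \<beta> b)) / S"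
        unfolding S_def by (simp add: add_divide_distrib[symmetric] algebra_simps)
      have 4: "(d * S + (\<beta> v + \<beta> b)) / S = d + (\<beta> v + \<beta> b) / S"
        using Spos by (simp add: add_divide_distrib)
      show ?thesis unfolding 1 2 3 4 ..
    qed
    finally show ?thesis using key by simp
  qed
  then have "(\<beta> v + \<beta> b) / S = 0" using pos[of n] by simp
  then show ?thesis using Spos unfolding v_def b_def h_def by simp
qed


theorem mainTheorem6:
  fixes l :: nat and W :: "nat \<Rightarrow> real" and X0 :: "nat \<Rightarrow> nat" and v0 :: nat
    and M :: "'a measure" and I :: "nat \<Rightarrow> 'a \<Rightarrow> nat" and \<beta> :: "nat \<Rightarrow> real"
  assumes "l \<ge> 3" and "odd l"
    and "\<And>k. W k > 0"
    and "v0 < l"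
    and "is_errw M l W X0 v0 I"
    and "is_martingale M (nat_filtration M I)
           (\<lambda>n \<omega>. \<Sum>i<l. \<beta> i * Wstar W (errw_X l X0 (\<lambda>k. I k \<omega>) n i))"
  shows "\<forall>i<l. \<beta> i = 0"
proof -
  have Mart: "is_martingale M (nat_filtration M I) (\<lambda>n \<omega>. ysum l W X0 \<beta> (\<lambda>k. I k \<omega>) n)"
    using assms(6) unfolding ysum_def .
  have rel: "\<beta> v + \<beta> (cpred l v) = 0" if vl: "v < l" for v
  proof -
    have "(v0 + (v + l - v0)) mod l = v" using vl assms(4) by simp
    then show ?thesis using step[OF assms(1) assms(3) assms(4) assms(5) Mart, of "v + l - v0"] by simp
  qed
  have alt: "\<beta> v = (-1) ^ v * \<beta> 0" if "v < l" for v
    using that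
  proof (induction v)
    case 0 then show ?case by simp
  next
    case (Suc v)
    have "\<beta> (Suc v) + \<beta> v = 0" using rel[OF Suc.prems] unfolding cpred_def by simp
    then show ?case using Suc.IH Suc.prems by simp
  qed
  have l1: "l - 1 < l" "0 < l" using assms(1) by auto
  have ev: "even (l - 1)" using assms(2) assms(1) by simp
  have "\<beta> 0 + \<beta> (l - 1) = 0" using rel[OF l1(2)] unfolding cpred_def by simp
  then have b0: "\<beta> 0 = 0" using alt[OF l1(1)] ev by simp
  show ?thesis using alt b0 by simp
qed

end
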